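(* Let $\gamma,\kappa\ge 2$, memory $m\ge 0$, coupling length $L\ge m+1$ and lifting degree $Z\ge1$, and consider a random QC-SC-LDPC code built from the $\gamma\times\kappa$ fully-connected base graph with uniform edge-spreading over $\{0,1,\ldots,m\}$ and uniform random lifting. Let $\Delta=(2\gamma-3)(2\kappa-3)$ and $$I=\frac{(\Delta-1)^{\Delta-1}}{\Delta^{\Delta}},\qquad II=\frac{27}{256(\gamma\kappa-\gamma-\kappa)}.$$ If $$\frac{2m^2+4m+3}{3(m+1)^3Z}\le\max\{I,II\},$$ then the probability that no 4-cycle candidate $c_4\in\mathcal{C}_4$ is active satisfies $$P\Big(\bigcap_{c_4\in\mathcal{C}_4}\overline{c_4}\Big)\ge\begin{cases}\left(1-\frac{2}{\Delta}\right)^{\frac{\gamma(\gamma-1)\kappa(\kappa-1)\Delta}{8}}, & \text{if } I>II,\\[2pt] \left(1-\frac{\gamma\kappa-\gamma-\kappa+1}{4(\gamma\kappa-\gamma-\kappa)}\right)^{\gamma\kappa}, & \text{otherwise,}\end{cases}$$ and in particular (this probability being positive) there exists such a QC-SC-LDPC code whose Tanner graph has girth at least 6.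
   Context: The base graph is the complete bipartite graph with check nodes $[\gamma]$, variable nodes $[\kappa]$ and edges $[\gamma]\times[\kappa]$ (all-one base matrix, no parallel edges). The code is determined by a partition matrix $\mathbf{P}\in\{0,\ldots,m\}^{\gamma\times\kappa}$ (edge $(i,j)$ goes to component matrix $\mathbf{H}_{\mathbf{P}(i,j)}$; the protograph is formed by stacking $\mathbf{H}_0,\ldots,\mathbf{H}_m$ into a replica and coupling $L$ replicas) and a lifting matrix $\mathbf{L}\in\{0,\ldots,Z-1\}^{\gamma\times\kappa}$ (entry replaced by the circulant permutation matrix $\sigma^{\mathbf{L}(i,j)}$). Randomly, the entries of $\mathbf{P}$ are i.i.d. uniform on $\{0,\ldots,m\}$ and the entries of $\mathbf{L}$ are i.i.d. uniform on $\{0,\ldots,Z-1\}$, independently. $\mathcal{C}_4$ is the set of 4-cycle candidates $(j_1,i_1,j_2,i_2)$ of the base graph (choice of two distinct rows $i_1,i_2$ and two distinct columns $j_1,j_2$); such a candidate is active iff $\mathbf{P}(i_1,j_1)+\mathbf{P}(i_2,j_2)=\mathbf{P}(i_1,j_2)+\mathbf{P}(i_2,j_1)$ and $\mathbf{L}(i_1,j_1)+\mathbf{L}(i_2,j_2)\equiv\mathbf{L}(i_1,j_2)+\mathbf{L}(i_2,j_1)\pmod Z$, and the Tanner graph has girth at least 6 iff no 4-cycle candidate is active. *)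

theory Defs
  imports "HOL-Analysis.Analysis"
begin

text \<open>Matrices are functions on index pairs (row i < gamma, column j < kappa),
  extensional (undefined outside the index set).\<close>

definition base_edges :: "nat \<Rightarrow> nat \<Rightarrow> (nat \<times> nat) set" where
  "base_edges \<gamma> \<kappa> = {0..<\<gamma>} \<times> {0..<\<kappa>}"

definition partition_matrices :: "nat \<Rightarrow> nat \<Rightarrow> nat \<Rightarrow> (nat \<times> nat \<Rightarrow> nat) set" where
  "partition_matrices \<gamma> \<kappa> m = base_edges \<gamma> \<kappa> \<rightarrow>\<^sub>E {0..m}"

definition lifting_matrices :: "nat \<Rightarrow> nat \<Rightarrow> nat \<Rightarrow> (nat \<times> nat \<Rightarrow> nat) set" where
  "lifting_matrices \<gamma> \<kappa> Z = base_edges \<gamma> \<kappa> \<rightarrow>\<^sub>E {0..<Z}"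

definition cycle4_candidates :: "nat \<Rightarrow> nat \<Rightarrow> (nat \<times> nat \<times> nat \<times> nat) set" where
  "cycle4_candidates \<gamma> \<kappa> =
     {(j1, i1, j2, i2). i1 < \<gamma> \<and> i2 < \<gamma> \<and> i1 \<noteq> i2 \<and> j1 < \<kappa> \<and> j2 < \<kappa> \<and> j1 \<noteq> j2}"

definition cycle4_active ::
  "nat \<Rightarrow> (nat \<times> nat \<Rightarrow> nat) \<Rightarrow> (nat \<times> nat \<Rightarrow> nat) \<Rightarrow> nat \<times> nat \<times> nat \<times> nat \<Rightarrow> bool" where
  "cycle4_active Z P Lm c = (case c of (j1, i1, j2, i2) \<Rightarrow>
      P (i1, j1) + P (i2, j2) = P (i1, j2) + P (i2, j1) \<and>
      (Lm (i1, j1) + Lm (i2, j2)) mod Z = (Lm (i1, j2) + Lm (i2, j1)) mod Z)"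

definition prob_no_active_c4 :: "nat \<Rightarrow> nat \<Rightarrow> nat \<Rightarrow> nat \<Rightarrow> real" where
  "prob_no_active_c4 \<gamma> \<kappa> m Z =
     real (card {(P, Lm) \<in> partition_matrices \<gamma> \<kappa> m \<times> lifting_matrices \<gamma> \<kappa> Z.
                   \<forall>c \<in> cycle4_candidates \<gamma> \<kappa>. \<not> cycle4_active Z P Lm c})
     / real (card (partition_matrices \<gamma> \<kappa> m \<times> lifting_matrices \<gamma> \<kappa> Z))"

end

theory Submission
  imports Defs
begin
lemma count_seq:
  fixes A :: "'a set" and Bad :: "nat \<Rightarrow> (nat \<Rightarrow> 'a) \<Rightarrow> 'a set" and c :: "nat \<Rightarrow> nat"
  assumes fin: "finite A"
  and cb: "\<And>k f. card (A \<inter> Bad k f) \<le> c k"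
  and loc: "\<And>k f g. (\<And>i. i < k \<Longrightarrow> f i = g i) \<Longrightarrow> Bad k f = Bad k g"
  shows "(\<Prod>k<n. (card A - c k)) \<le> card {f \<in> {..<n} \<rightarrow>\<^sub>E A. \<forall>k<n. f k \<notin> Bad k f}"
proof (induction n)
  case 0
  show ?case by simp
next
  case (Suc n)
  define G where "G n = {f \<in> {..<n} \<rightarrow>\<^sub>E A. \<forall>k<n. f k \<notin> Bad k f}" for n
  have finG: "finite (G n)" for n unfolding G_def
    by (rule finite_subset[OF _ finite_PiE[of "{..<n}" "\<lambda>_. A"]]) (auto simp: fin)
  let ?S = "SIGMA f:G n. A - Bad n f"
  let ?h = "\<lambda>(f,a). f(n:=a)"
  have inj: "inj_on ?h ?S"
  proof (rule inj_onI, clarsimp)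
    fix f a f' a'
    assume f: "f \<in> G n" and f': "f' \<in> G n" and eq: "f(n := a) = f'(n := a')"
    have "a = a'" using fun_cong[OF eq, of n] by simp
    moreover have "f = f'"
    proof
      fix x show "f x = f' x"
      proof (cases "x = n")
        case True
        have "f n = undefined" "f' n = undefined" using f f' unfolding G_def
          by (auto simp: PiE_def extensional_def)
        then show ?thesis using True by simp
      next
        case False then show ?thesis using fun_cong[OF eq, of x] by simp
      qed
    qed
    ultimately show "f = f' \<and> a = a'" by simp
  qed
  have sub: "?h ` ?S \<subseteq> G (Suc n)"
  proof clarsimp
    fix f a assume f: "f \<in> G n" and a: "a \<in> A" "a \<notin> Bad n f"
    have B: "Bad k (f(n:=a)) = Bad k f" if "k \<le> n" for k
      by (rule loc) (use that in auto)
    show "f(n := a) \<in> G (Suc n)" unfolding G_def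
    proof (intro CollectI conjI allI impI)
      show "f(n := a) \<in> {..<Suc n} \<rightarrow>\<^sub>E A" using f a unfolding G_def
        by (auto simp: PiE_def extensional_def Pi_def)
    next
      fix k assume "k < Suc n"
      then show "(f(n := a)) k \<notin> Bad k (f(n := a))"
        using f a B[of k] unfolding G_def by (cases "k = n") auto
    qed
  qed
  have "card ?S = (\<Sum>f\<in>G n. card (A - Bad n f))"
    by (rule card_SigmaI) (use finG fin in auto)
  also have "\<dots> \<ge> (\<Sum>f\<in>G n. card A - c n)"
  proof (rule sum_mono)
    fix f
    have "card (A - Bad n f) = card A - card (A \<inter> Bad n f)"
      using fin by (simp add: card_Diff_subset_Int)
    then show "card A - c n \<le> card (A - Bad n f)" using cb[of n f] by simp
  qed
  finally have "card (G n) * (card A - c n) \<le> card ?S" by simp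
  also have "card ?S = card (?h ` ?S)" using card_image[OF inj] by simp
  also have "\<dots> \<le> card (G (Suc n))"
    by (rule card_mono[OF _ sub]) (rule finG)
  finally have L1: "card (G n) * (card A - c n) \<le> card (G (Suc n))" .
  have IH: "(\<Prod>k<n. (card A - c k)) \<le> card (G n)" using Suc.IH unfolding G_def .
  have "(card A - c n) * (\<Prod>k<n. (card A - c k)) \<le> (card A - c n) * card (G n)"
    using IH by (rule mult_le_mono2)
  also have "\<dots> = card (G n) * (card A - c n)" by (rule mult.commute)
  also have "\<dots> \<le> card (G (Suc n))" by (rule L1)
  finally have "(card A - c n) * (\<Prod>k<n. (card A - c k)) \<le> card (G (Suc n))" .
  then show ?case unfolding G_def by (simp add: mult.commute)
qed


definition brel :: "nat \<Rightarrow> nat \<times> nat \<Rightarrow> nat \<times> nat \<Rightarrow> nat \<times> nat \<Rightarrow> nat \<times> nat \<Rightarrow> bool" where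
  "brel Z a x y w \<longleftrightarrow> fst a + fst w = fst x + fst y \<and> (snd a + snd w) mod Z = (snd x + snd y) mod Z"

lemma mod_cancel_lt:
  fixes s s' w Z :: nat
  assumes "s < Z" "s' < Z" "(s + w) mod Z = (s' + w) mod Z"
  shows "s = s'"
proof -
  have "s mod Z = s' mod Z" using assms(3)
    using nat_mod_eq_iff by auto  
  then show ?thesis using assms by simp
qed

lemma brel_unique:
  assumes "a \<in> {0..m} \<times> {0..<Z}" "a' \<in> {0..m} \<times> {0..<Z}" "brel Z a x y w" "brel Z a' x y w"
  shows "a = a'"
proof -
  have "fst a = fst a'" using assms(3,4) unfolding brel_def by simp
  moreover have "snd a = snd a'"
    using assms mod_cancel_lt[of "snd a" Z "snd a'" "snd w"] unfolding brel_def by auto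
  ultimately show ?thesis by (simp add: prod_eq_iff)
qed

lemma sum_divmod:
  "(\<Sum>k<g*K. f (k div K) (k mod K)) = (\<Sum>i<g. \<Sum>j<K. f i j)" for f :: "nat \<Rightarrow> nat \<Rightarrow> 'a::comm_monoid_add"
proof (induction g)
  case 0 then show ?case by simp
next
  case (Suc g)
  have "{..<Suc g * K} = {..<g*K} \<union> {g*K..<g*K+K}" by auto
  then have "(\<Sum>k<Suc g*K. f (k div K) (k mod K)) = (\<Sum>k<g*K. f (k div K) (k mod K)) + (\<Sum>k\<in>{g*K..<g*K+K}. f (k div K) (k mod K))"
    by (simp add: sum.union_disjoint ivl_disj_int)
  also have "(\<Sum>k\<in>{g*K..<g*K+K}. f (k div K) (k mod K)) = (\<Sum>j<K. f g j)"
  proof -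
    have "(\<Sum>k\<in>{g*K..<g*K+K}. f (k div K) (k mod K)) = (\<Sum>j\<in>{0..<K}. f ((j + g*K) div K) ((j+g*K) mod K))"
      using sum.shift_bounds_nat_ivl[of "\<lambda>k. f (k div K) (k mod K)" 0 "g*K" K] by (simp add: add.commute)
    also have "\<dots> = (\<Sum>j<K. f g j)"
      by (rule sum.cong) (auto simp: lessThan_atLeast0)
    finally show ?thesis .
  qed
  finally show ?case using Suc.IH by simp
qed


lemma active_swap_j: "cycle4_active Z P L (j1,i1,j2,i2) = cycle4_active Z P L (j2,i1,j1,i2)"
  unfolding cycle4_active_def by (auto simp: add.commute)
lemma active_swap_i: "cycle4_active Z P L (j1,i1,j2,i2) = cycle4_active Z P L (j1,i2,j2,i1)"
  unfolding cycle4_active_def by (auto simp: add.commute)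

lemma good_card:
  fixes \<gamma> \<kappa> m Z :: nat
  shows "(\<Prod>k<\<gamma>*\<kappa>. (m+1)*Z - (k div \<kappa>)*(k mod \<kappa>)) \<le>
    card {(P, Lm) \<in> partition_matrices \<gamma> \<kappa> m \<times> lifting_matrices \<gamma> \<kappa> Z.
                   \<forall>c \<in> cycle4_candidates \<gamma> \<kappa>. \<not> cycle4_active Z P Lm c}"
proof -
  define A where "A = {0..m} \<times> {0..<Z}"
  define Bad where "Bad k F = {a. \<exists>i'<k div \<kappa>. \<exists>j'<k mod \<kappa>.
      brel Z a (F((k div \<kappa>)*\<kappa>+j')) (F(i'*\<kappa> + k mod \<kappa>)) (F(i'*\<kappa>+j'))}"
    for k and F :: "nat \<Rightarrow> nat \<times> nat"
  have finA: "finite A" unfolding A_def by simp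
  have cA: "card A = (m+1)*Z" unfolding A_def by (simp add: card_cartesian_product)
  have cb: "card (A \<inter> Bad k F) \<le> (k div \<kappa>)*(k mod \<kappa>)" for k F
  proof -
    let ?U = "\<lambda>p. {a\<in>A. brel Z a (F((k div \<kappa>)*\<kappa>+snd p)) (F(fst p*\<kappa> + k mod \<kappa>)) (F(fst p*\<kappa>+snd p))}"
    have "A \<inter> Bad k F \<subseteq> (\<Union>p\<in>{..<k div \<kappa>}\<times>{..<k mod \<kappa>}. ?U p)"
      unfolding Bad_def by force
    then have "card (A \<inter> Bad k F) \<le> card (\<Union>p\<in>{..<k div \<kappa>}\<times>{..<k mod \<kappa>}. ?U p)"
      by (rule card_mono[rotated]) (auto simp: finA)
    also have "\<dots> \<le> (\<Sum>p\<in>{..<k div \<kappa>}\<times>{..<k mod \<kappa>}. card (?U p))"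
      by (rule card_UN_le) simp
    also have "\<dots> \<le> (\<Sum>p\<in>{..<k div \<kappa>}\<times>{..<k mod \<kappa>}. 1)"
    proof (rule sum_mono)
      fix p
      have "finite (?U p)" using finA by simp
      moreover have "\<forall>x\<in>?U p. \<forall>y\<in>?U p. x = y"
      proof (intro ballI)
        fix x y assume "x \<in> ?U p" "y \<in> ?U p"
        then show "x = y" unfolding A_def
          apply (elim CollectE conjE)
          apply (rule brel_unique[where m=m and Z=Z])
          apply assumption+
          done
      qed
      ultimately show "card (?U p) \<le> 1"
        by (subst One_nat_def, subst card_le_Suc0_iff_eq) blast+
    qed
    also have "\<dots> = (k div \<kappa>)*(k mod \<kappa>)" by (simp add: card_cartesian_product)
    finally show ?thesis .
  qed
  have loc: "Bad k F = Bad k G" if "\<And>i. i < k \<Longrightarrow> F i = G i" for k F G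
  proof -
    have lt: "(k div \<kappa>)*\<kappa>+j' < k" "i'*\<kappa> + k mod \<kappa> < k" "i'*\<kappa>+j' < k"
      if "i' < k div \<kappa>" "j' < k mod \<kappa>" for i' j'
    proof -
      have kp: "\<kappa> > 0" using that by (cases "\<kappa> = 0") auto
      have k: "k = (k div \<kappa>)*\<kappa> + k mod \<kappa>" by simp
      have "(i'+1)*\<kappa> \<le> (k div \<kappa>)*\<kappa>" using that by (intro mult_le_mono1) simp
      then have "i'*\<kappa> + \<kappa> \<le> (k div \<kappa>)*\<kappa>" by simp
      moreover have "k mod \<kappa> < \<kappa>" using kp by simp
      ultimately show "(k div \<kappa>)*\<kappa>+j' < k" "i'*\<kappa> + k mod \<kappa> < k" "i'*\<kappa>+j' < k"
        using that k by linarith+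
    qed
    have e1: "F((k div \<kappa>)*\<kappa>+j') = G((k div \<kappa>)*\<kappa>+j')"
      and e2: "F(i'*\<kappa> + k mod \<kappa>) = G(i'*\<kappa> + k mod \<kappa>)"
      and e3: "F(i'*\<kappa>+j') = G(i'*\<kappa>+j')"
      if "i' < k div \<kappa>" "j' < k mod \<kappa>" for i' j'
      using lt[OF that] that(1) by (simp_all add: \<open>\<And>i. i < k \<Longrightarrow> F i = G i\<close>)
    show ?thesis unfolding Bad_def
      by (intro Collect_cong ex_cong1 conj_cong refl) (simp add: e1 e2 e3)
  qed
  have cnt: "(\<Prod>k<\<gamma>*\<kappa>. (card A - (k div \<kappa>)*(k mod \<kappa>))) \<le>
      card {F \<in> {..<\<gamma>*\<kappa>} \<rightarrow>\<^sub>E A. \<forall>k<\<gamma>*\<kappa>. F k \<notin> Bad k F}"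
    by (rule count_seq[OF finA cb loc])
  define GF where "GF = {F \<in> {..<\<gamma>*\<kappa>} \<rightarrow>\<^sub>E A. \<forall>k<\<gamma>*\<kappa>. F k \<notin> Bad k F}"
  define T where "T = {(P, Lm) \<in> partition_matrices \<gamma> \<kappa> m \<times> lifting_matrices \<gamma> \<kappa> Z.
                   \<forall>c \<in> cycle4_candidates \<gamma> \<kappa>. \<not> cycle4_active Z P Lm c}"
  define \<Phi> where "\<Phi> F = ((\<lambda>(i,j). if i < \<gamma> \<and> j < \<kappa> then fst (F (i*\<kappa>+j)) else undefined),
                           (\<lambda>(i,j). if i < \<gamma> \<and> j < \<kappa> then snd (F (i*\<kappa>+j)) else undefined))"
    for F :: "nat \<Rightarrow> nat \<times> nat"
  have idx: "i*\<kappa>+j < \<gamma>*\<kappa>" "(i*\<kappa>+j) div \<kappa> = i" "(i*\<kappa>+j) mod \<kappa> = j"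
    if "i < \<gamma>" "j < \<kappa>" for i j
  proof -
    have "(i+1)*\<kappa> \<le> \<gamma>*\<kappa>" using that by (intro mult_le_mono1) simp
    then show "i*\<kappa>+j < \<gamma>*\<kappa>" using that by simp
    show "(i*\<kappa>+j) div \<kappa> = i" "(i*\<kappa>+j) mod \<kappa> = j" using that by auto
  qed
  have inj: "inj_on \<Phi> GF"
  proof (rule inj_onI)
    fix F G assume F: "F \<in> GF" and G: "G \<in> GF" and eq: "\<Phi> F = \<Phi> G"
    show "F = G"
    proof
      fix k show "F k = G k"
      proof (cases "k < \<gamma>*\<kappa>")
        case True
        have kp: "\<kappa> > 0" using True by (cases "\<kappa> = 0") auto
        have i: "k div \<kappa> < \<gamma>" using True kp by (simp add: div_less_iff_less_mult)
        have j: "k mod \<kappa> < \<kappa>" using kp by simp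
        have k: "k = (k div \<kappa>)*\<kappa> + k mod \<kappa>" by simp
        have "fst (F k) = fst (G k)"
          using fun_cong[OF arg_cong[OF eq, of fst], of "(k div \<kappa>, k mod \<kappa>)"] i j k
          unfolding \<Phi>_def by simp
        moreover have "snd (F k) = snd (G k)"
          using fun_cong[OF arg_cong[OF eq, of snd], of "(k div \<kappa>, k mod \<kappa>)"] i j k
          unfolding \<Phi>_def by simp
        ultimately show ?thesis by (simp add: prod_eq_iff)
      next
        case False
        then show ?thesis using F G unfolding GF_def by (auto simp: PiE_def extensional_def)
      qed
    qed
  qed
  have img: "\<Phi> ` GF \<subseteq> T"
  proof (rule image_subsetI)
    fix F assume F: "F \<in> GF"
    have FA: "F (i*\<kappa>+j) \<in> A" if "i < \<gamma>" "j < \<kappa>" for i j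
      using F idx[OF that] unfolding GF_def by auto
    have key: "\<not> cycle4_active Z (fst (\<Phi> F)) (snd (\<Phi> F)) (j,i,j',i')"
      if "i' < i" "i < \<gamma>" "j' < j" "j < \<kappa>" for i i' j j'
    proof
      assume act: "cycle4_active Z (fst (\<Phi> F)) (snd (\<Phi> F)) (j,i,j',i')"
      let ?k = "i*\<kappa>+j"
      have "brel Z (F ?k) (F(i*\<kappa>+j')) (F(i'*\<kappa>+j)) (F(i'*\<kappa>+j'))"
        using act that unfolding cycle4_active_def brel_def \<Phi>_def by auto
      then have "F ?k \<in> Bad ?k F" unfolding Bad_def using idx[OF that(2,4)] that by auto
      then show False using F idx[OF that(2,4)] unfolding GF_def by auto
    qed
    have p1: "fst (\<Phi> F) \<in> partition_matrices \<gamma> \<kappa> m"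
      unfolding partition_matrices_def base_edges_def
    proof (rule PiE_I)
      fix x assume "x \<in> {0..<\<gamma>} \<times> {0..<\<kappa>}"
      then obtain i j where x: "x = (i,j)" "i < \<gamma>" "j < \<kappa>" by auto
      show "fst (\<Phi> F) x \<in> {0..m}" using FA[OF x(2,3)] x unfolding A_def \<Phi>_def by auto
    next
      fix x assume "x \<notin> {0..<\<gamma>} \<times> {0..<\<kappa>}"
      then show "fst (\<Phi> F) x = undefined" unfolding \<Phi>_def by (cases x) auto
    qed
    have p2: "snd (\<Phi> F) \<in> lifting_matrices \<gamma> \<kappa> Z"
      unfolding lifting_matrices_def base_edges_def
    proof (rule PiE_I)
      fix x assume "x \<in> {0..<\<gamma>} \<times> {0..<\<kappa>}"
      then obtain i j where x: "x = (i,j)" "i < \<gamma>" "j < \<kappa>" by auto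
      show "snd (\<Phi> F) x \<in> {0..<Z}" using FA[OF x(2,3)] x unfolding A_def \<Phi>_def by auto
    next
      fix x assume "x \<notin> {0..<\<gamma>} \<times> {0..<\<kappa>}"
      then show "snd (\<Phi> F) x = undefined" unfolding \<Phi>_def by (cases x) auto
    qed
    have "\<Phi> F \<in> partition_matrices \<gamma> \<kappa> m \<times> lifting_matrices \<gamma> \<kappa> Z"
      using p1 p2 by (simp add: mem_Times_iff)
    moreover have "\<forall>c \<in> cycle4_candidates \<gamma> \<kappa>. \<not> cycle4_active Z (fst (\<Phi> F)) (snd (\<Phi> F)) c"
    proof (clarify)
      fix j1 i1 j2 i2 assume c: "(j1,i1,j2,i2) \<in> cycle4_candidates \<gamma> \<kappa>"
        and act: "cycle4_active Z (fst (\<Phi> F)) (snd (\<Phi> F)) (j1,i1,j2,i2)"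
      from c have c': "i1 < \<gamma>" "i2 < \<gamma>" "i1 \<noteq> i2" "j1 < \<kappa>" "j2 < \<kappa>" "j1 \<noteq> j2"
        unfolding cycle4_candidates_def by auto
      let ?P = "fst (\<Phi> F)" and ?L = "snd (\<Phi> F)"
      have a2: "cycle4_active Z ?P ?L (j2,i1,j1,i2)" using act active_swap_j by metis
      have a3: "cycle4_active Z ?P ?L (j1,i2,j2,i1)" using act active_swap_i by metis
      have a4: "cycle4_active Z ?P ?L (j2,i2,j1,i1)" using a2 active_swap_i by metis
      consider "i2 < i1" "j2 < j1" | "i2 < i1" "j1 < j2" | "i1 < i2" "j2 < j1" | "i1 < i2" "j1 < j2"
        using c' by (meson linorder_neqE_nat)
      then show False
      proof cases
        case 1
        have "\<not> cycle4_active Z ?P ?L (j1,i1,j2,i2)" by (rule key) (use c' 1 in auto)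
        then show False using act by simp
      next
        case 2
        have "\<not> cycle4_active Z ?P ?L (j2,i1,j1,i2)" by (rule key) (use c' 2 in auto)
        then show False using a2 by simp
      next
        case 3
        have "\<not> cycle4_active Z ?P ?L (j1,i2,j2,i1)" by (rule key) (use c' 3 in auto)
        then show False using a3 by simp
      next
        case 4
        have "\<not> cycle4_active Z ?P ?L (j2,i2,j1,i1)" by (rule key) (use c' 4 in auto)
        then show False using a4 by simp
      qed
    qed
    ultimately show "\<Phi> F \<in> T" unfolding T_def by (auto simp: case_prod_beta mem_Times_iff)
  qed
  have finT: "finite T"
  proof -
    have "finite (partition_matrices \<gamma> \<kappa> m \<times> lifting_matrices \<gamma> \<kappa> Z)"
      unfolding partition_matrices_def lifting_matrices_def base_edges_def
      by (intro finite_cartesian_product finite_PiE) auto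
    then show ?thesis unfolding T_def by (rule finite_subset[rotated]) auto
  qed
  have "card GF \<le> card T" using card_inj_on_le[OF inj img finT] .
  then show ?thesis using cnt unfolding GF_def T_def cA by linarith
qed


lemma card_total:
  "card (partition_matrices \<gamma> \<kappa> m \<times> lifting_matrices \<gamma> \<kappa> Z) = ((m+1)*Z)^(\<gamma>*\<kappa>)"
proof -
  have "card (partition_matrices \<gamma> \<kappa> m \<times> lifting_matrices \<gamma> \<kappa> Z) = (m+1)^(\<gamma>*\<kappa>) * Z^(\<gamma>*\<kappa>)"
    by (simp add: partition_matrices_def lifting_matrices_def base_edges_def card_cartesian_product
      card_PiE)
  also have "\<dots> = ((m+1)*Z)^(\<gamma>*\<kappa>)" by (rule power_mult_distrib[symmetric])
  finally show ?thesis .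
qed

lemma gauss2: "2 * (\<Sum>i<n. i) = n * (n - 1)" for n :: nat
  by (induction n) (auto simp: algebra_simps)

lemma sum_c: "real (\<Sum>k<\<gamma>*\<kappa>. (k div \<kappa>)*(k mod \<kappa>)) = real \<gamma> * (real \<gamma> - 1) * real \<kappa> * (real \<kappa> - 1) / 4"
  if "\<gamma> \<ge> 1" "\<kappa> \<ge> 1"
proof -
  have "(\<Sum>k<\<gamma>*\<kappa>. (k div \<kappa>)*(k mod \<kappa>)) = (\<Sum>i<\<gamma>. \<Sum>j<\<kappa>. i * j)"
    by (rule sum_divmod)
  also have "\<dots> = (\<Sum>i<\<gamma>. i) * (\<Sum>j<\<kappa>. j)" by (simp add: sum_product)
  finally have e: "4 * (\<Sum>k<\<gamma>*\<kappa>. (k div \<kappa>)*(k mod \<kappa>)) = (\<gamma> * (\<gamma> - 1)) * (\<kappa> * (\<kappa> - 1))"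
    using gauss2[of \<gamma>] gauss2[of \<kappa>] by (metis mult.assoc mult.left_commute numeral_Bit0_eq_double mult_2)
  have "4 * real (\<Sum>k<\<gamma>*\<kappa>. (k div \<kappa>)*(k mod \<kappa>)) = real (\<gamma> * (\<gamma> - 1)) * real (\<kappa> * (\<kappa> - 1))"
    using arg_cong[OF e, of real] by simp
  then show ?thesis using that by (simp add: of_nat_diff)
qed

lemma prob_ge:
  assumes "\<And>k. k < \<gamma>*\<kappa> \<Longrightarrow> (k div \<kappa>)*(k mod \<kappa>) \<le> (m+1)*Z" "Z \<ge> 1"
  shows "prob_no_active_c4 \<gamma> \<kappa> m Z \<ge>
    (\<Prod>k<\<gamma>*\<kappa>. 1 - real ((k div \<kappa>)*(k mod \<kappa>)) / real ((m+1)*Z))"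
proof -
  define M where "M = (m+1)*Z"
  have "M > 0" using assms(2) unfolding M_def by simp
  then have Mp: "real M > 0" by simp
  have "(\<Prod>k<\<gamma>*\<kappa>. 1 - real ((k div \<kappa>)*(k mod \<kappa>)) / real M)
        = (\<Prod>k<\<gamma>*\<kappa>. real (M - (k div \<kappa>)*(k mod \<kappa>)) / real M)"
  proof (rule prod.cong[OF refl])
    fix k assume "k \<in> {..<\<gamma>*\<kappa>}"
    then have "(k div \<kappa>)*(k mod \<kappa>) \<le> M" using assms(1) unfolding M_def by simp
    then show "1 - real ((k div \<kappa>)*(k mod \<kappa>)) / real M = real (M - (k div \<kappa>)*(k mod \<kappa>)) / real M"
      using Mp by (simp add: of_nat_diff field_simps)
  qed
  also have "\<dots> = real (\<Prod>k<\<gamma>*\<kappa>. M - (k div \<kappa>)*(k mod \<kappa>)) / real M ^ (\<gamma>*\<kappa>)"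
    by (simp add: prod_dividef)
  also have "\<dots> \<le> prob_no_active_c4 \<gamma> \<kappa> m Z"
  proof -
    have "real (\<Prod>k<\<gamma>*\<kappa>. M - (k div \<kappa>)*(k mod \<kappa>)) \<le> real (card {(P, Lm) \<in> partition_matrices \<gamma> \<kappa> m \<times> lifting_matrices \<gamma> \<kappa> Z.
                   \<forall>c \<in> cycle4_candidates \<gamma> \<kappa>. \<not> cycle4_active Z P Lm c})"
      unfolding of_nat_le_iff M_def by (rule good_card)
    then have "real (\<Prod>k<\<gamma>*\<kappa>. M - (k div \<kappa>)*(k mod \<kappa>)) / real M ^ (\<gamma>*\<kappa>) \<le> real (card {(P, Lm) \<in> partition_matrices \<gamma> \<kappa> m \<times> lifting_matrices \<gamma> \<kappa> Z.
                   \<forall>c \<in> cycle4_candidates \<gamma> \<kappa>. \<not> cycle4_active Z P Lm c}) / real M ^ (\<gamma>*\<kappa>)"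
      by (rule divide_right_mono) simp
    moreover have eq: "real M ^ (\<gamma>*\<kappa>) = real (card (partition_matrices \<gamma> \<kappa> m \<times> lifting_matrices \<gamma> \<kappa> Z))"
      unfolding card_total M_def by simp
    ultimately show ?thesis unfolding prob_no_active_c4_def eq[symmetric] by simp
  qed
  finally show ?thesis unfolding M_def .
qed

lemma I_bound:
  fixes d :: nat assumes "d \<ge> 2"
  shows "real (d - 1) ^ (d - 1) / real d ^ d \<le> 1 / (2 * real d)"
proof -
  have d1: "real (d - 1) = real d - 1" using assms by (simp add: of_nat_diff)
  have pos: "real d - 1 > 0" using assms by simp
  have "1 + real (d - 1) * (1 / (real d - 1)) \<le> (1 + 1 / (real d - 1)) ^ (d - 1)"
  proof (rule Bernoulli_inequality)
    have "0 \<le> 1 / (real d - 1)" using pos by simp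
    then show "-1 \<le> 1 / (real d - 1)" by linarith
  qed
  then have "2 \<le> (real d / (real d - 1)) ^ (d - 1)"
    using pos d1 by (simp add: field_simps)
  then have "2 * (real d - 1) ^ (d - 1) \<le> real d ^ (d - 1)"
    using pos by (simp add: power_divide field_simps)
  moreover have "real d ^ d = real d * real d ^ (d - 1)"
    using assms by (cases d) auto
  ultimately show ?thesis using d1 pos assms by (simp add: field_simps)
qed

lemma exp_le_factor:
  fixes M :: real and c :: nat
  assumes "real c + 1 \<le> M"
  shows "exp (- real c) \<le> 1 - real c / M"
proof -
  have "1 + real c \<le> exp (real c)" by (rule exp_ge_add_one_self)
  then have "exp (- real c) \<le> 1 / (1 + real c)"
    by (simp add: exp_minus field_simps)
  also have "\<dots> \<le> 1 - real c / M"
  proof -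
    have Mp: "M > 0" using assms by (smt (verit) of_nat_0_le_iff)
    have "(real c + 1) * real c \<le> M * real c" by (rule mult_right_mono) (use assms in simp_all)
    then show ?thesis using Mp by (simp add: field_simps)
  qed
  finally show ?thesis .
qed

theorem corollary1:
  fixes \<gamma> \<kappa> m Lc Z :: nat
  assumes "\<gamma> \<ge> 2" and "\<kappa> \<ge> 2" and "\<not> (\<gamma> = 2 \<and> \<kappa> = 2)"
    and "Lc \<ge> m + 1" and "Z \<ge> 1"
  defines "\<Delta> \<equiv> (2 * \<gamma> - 3) * (2 * \<kappa> - 3)"
  defines "I \<equiv> real (\<Delta> - 1) ^ (\<Delta> - 1) / real \<Delta> ^ \<Delta>"
  defines "II \<equiv> 27 / (256 * (real \<gamma> * real \<kappa> - real \<gamma> - real \<kappa>))"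
  assumes "(2 * real m ^ 2 + 4 * real m + 3) / (3 * (real m + 1) ^ 3 * real Z) \<le> max I II"
  shows "prob_no_active_c4 \<gamma> \<kappa> m Z \<ge>
           (if I > II
            then (1 - 2 / real \<Delta>) powr
                   (real \<gamma> * (real \<gamma> - 1) * real \<kappa> * (real \<kappa> - 1) * real \<Delta> / 8)
            else (1 - (real \<gamma> * real \<kappa> - real \<gamma> - real \<kappa> + 1)
                        / (4 * (real \<gamma> * real \<kappa> - real \<gamma> - real \<kappa>))) ^ (\<gamma> * \<kappa>))
       \<and> prob_no_active_c4 \<gamma> \<kappa> m Z > 0
       \<and> (\<exists>P \<in> partition_matrices \<gamma> \<kappa> m. \<exists>Lm \<in> lifting_matrices \<gamma> \<kappa> Z.
            \<forall>c \<in> cycle4_candidates \<gamma> \<kappa>. \<not> cycle4_active Z P Lm c)"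
proof -
  define M where "M = (m+1)*Z"
  define D where "D = (\<gamma>-1)*(\<kappa>-1)"
  define c where "c k = (k div \<kappa>)*(k mod \<kappa>)" for k
  define kk where "kk = real \<gamma> * real \<kappa> - real \<gamma> - real \<kappa>"
  define S where "S = real \<gamma> * (real \<gamma> - 1) * real \<kappa> * (real \<kappa> - 1) / 4"
  define p where "p = (2 * real m ^ 2 + 4 * real m + 3) / (3 * (real m + 1) ^ 3 * real Z)"
  have g1: "real (\<gamma>-1) = real \<gamma> - 1" and k1: "real (\<kappa>-1) = real \<kappa> - 1"
    using assms(1,2) by (simp_all add: of_nat_diff)
  have cD: "c k \<le> D" if "k < \<gamma>*\<kappa>" for k
  proof -
    have kp: "\<kappa> > 0" using assms(2) by simp
    have "k div \<kappa> < \<gamma>" using that kp by (simp add: div_less_iff_less_mult)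
    then have a: "k div \<kappa> \<le> \<gamma> - 1" by simp
    have "k mod \<kappa> < \<kappa>" using kp by simp
    then have b: "k mod \<kappa> \<le> \<kappa> - 1" by simp
    show ?thesis unfolding c_def D_def using mult_le_mono[OF a b] .
  qed
  have D2: "D \<ge> 2"
  proof (cases "\<gamma> = 2")
    case True
    then have "\<kappa> - 1 \<ge> 2" using assms(2,3) by simp
    then show ?thesis unfolding D_def using True by simp
  next
    case False
    then have "\<gamma> - 1 \<ge> 2" "\<kappa> - 1 \<ge> 1" using assms(1,2) by simp_all
    then show ?thesis unfolding D_def using mult_le_mono[of 2 "\<gamma>-1" 1 "\<kappa>-1"] by simp
  qed
  have Dreal: "real D = kk + 1"
  proof -
    have "real D = real (\<gamma>-1) * real (\<kappa>-1)" by (simp only: D_def of_nat_mult)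
    then show ?thesis unfolding g1 k1 kk_def by (simp add: algebra_simps)
  qed
  have kk1: "kk \<ge> 1" using D2 Dreal by linarith
  have Dd: "D \<le> \<Delta>" unfolding D_def \<Delta>_def by (rule mult_le_mono) (use assms(1,2) in simp_all)
  have d3: "\<Delta> \<ge> 3"
  proof (cases "\<gamma> = 2")
    case True
    then have "2*\<kappa> - 3 \<ge> 3" using assms(2,3) by simp
    then show ?thesis unfolding \<Delta>_def using True by simp
  next
    case False
    then have "2*\<gamma> - 3 \<ge> 3" "2*\<kappa> - 3 \<ge> 1" using assms(1,2) by simp_all
    then show ?thesis unfolding \<Delta>_def using mult_le_mono[of 3 "2*\<gamma>-3" 1 "2*\<kappa>-3"] by simp
  qed
  have "M \<ge> 1" unfolding M_def using assms(5) by simp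
  then have Mpos: "real M \<ge> 1" by simp
  have zpos: "real Z > 0" using assms(5) by simp
  have hyp2: "2 / (3 * real M) \<le> max I II"
  proof -
    have rM: "real M = (real m + 1) * real Z" by (simp add: M_def algebra_simps)
    have r1: "(real m + 1)^2 > 0" by simp
    have "2 * (real m + 1)^2 / (3 * (real m + 1) ^ 3 * real Z) = ((real m + 1)^2 * 2) / ((real m + 1)^2 * (3 * real M))"
      unfolding rM by (simp add: power2_eq_square power3_eq_cube algebra_simps)
    also have "\<dots> = 2 / (3 * real M)" using r1 by (subst mult_divide_mult_cancel_left) simp_all
    finally have "2 / (3 * real M) = 2 * (real m + 1)^2 / (3 * (real m + 1) ^ 3 * real Z)" by simp
    also have "\<dots> \<le> p" unfolding p_def
      by (rule divide_right_mono) (simp_all add: power2_eq_square algebra_simps)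
    finally show ?thesis using assms(9) unfolding p_def by linarith
  qed
  have cM: "real (c k) + 1 \<le> real M" if "k < \<gamma>*\<kappa>" for k
  proof (cases "I > II")
    case True
    then have "2 / (3 * real M) \<le> I" using hyp2 by simp
    also have "I \<le> 1 / (2 * real \<Delta>)" unfolding I_def by (rule I_bound) (use d3 in simp)
    finally have "4 * real \<Delta> \<le> 3 * real M" using Mpos d3 by (simp add: field_simps)
    moreover have "real (c k) \<le> real \<Delta>" using cD[OF that] Dd by simp
    ultimately show ?thesis using d3 by linarith
  next
    case False
    then have "2 / (3 * real M) \<le> II" using hyp2 by simp
    then have "2 / (3 * real M) \<le> 27 / (256 * kk)" unfolding II_def kk_def .
    then have "512 * kk \<le> 81 * real M" using Mpos kk1 by (simp add: field_simps)
    moreover have "real (c k) \<le> kk + 1" using cD[OF that] Dreal of_nat_le_iff[of "c k" D] by simp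
    ultimately show ?thesis using kk1 by linarith
  qed
  have prob_lb: "prob_no_active_c4 \<gamma> \<kappa> m Z \<ge> (\<Prod>k<\<gamma>*\<kappa>. 1 - real (c k) / real M)"
  proof -
    have "(k div \<kappa>)*(k mod \<kappa>) \<le> (m+1)*Z" if "k < \<gamma>*\<kappa>" for k
    proof -
      have "real (c k) \<le> real M" using cM[OF that] by simp
      then show ?thesis unfolding c_def M_def by (simp only: of_nat_le_iff)
    qed
    then show ?thesis using prob_ge[of \<gamma> \<kappa> m Z] assms(5) unfolding c_def M_def by simp
  qed
  have prodpos: "(\<Prod>k<\<gamma>*\<kappa>. 1 - real (c k) / real M) > 0"
  proof (rule prod_pos)
    fix k assume "k \<in> {..<\<gamma>*\<kappa>}"
    then have "real (c k) + 1 \<le> real M" using cM by simp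
    then show "0 < 1 - real (c k) / real M" using Mpos by (simp add: field_simps)
  qed
  have bound: "(if I > II
            then (1 - 2 / real \<Delta>) powr
                   (real \<gamma> * (real \<gamma> - 1) * real \<kappa> * (real \<kappa> - 1) * real \<Delta> / 8)
            else (1 - (real \<gamma> * real \<kappa> - real \<gamma> - real \<kappa> + 1)
                        / (4 * (real \<gamma> * real \<kappa> - real \<gamma> - real \<kappa>))) ^ (\<gamma> * \<kappa>))
        \<le> (\<Prod>k<\<gamma>*\<kappa>. 1 - real (c k) / real M)"
  proof (cases "I > II")
    case True
    have dpos: "real \<Delta> \<ge> 3" using d3 by simp
    have bpos: "1 - 2 / real \<Delta> > 0" using dpos by (simp add: field_simps)
    have S0: "S \<ge> 0" unfolding S_def using assms(1,2) by simp
    have e: "real \<gamma> * (real \<gamma> - 1) * real \<kappa> * (real \<kappa> - 1) * real \<Delta> / 8 = S * real \<Delta> / 2"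
      unfolding S_def by simp
    have "ln (1 - 2 / real \<Delta>) \<le> - 2 / real \<Delta>" using ln_le_minus_one[OF bpos] by simp
    then have "S * real \<Delta> / 2 * ln (1 - 2 / real \<Delta>) \<le> S * real \<Delta> / 2 * (- 2 / real \<Delta>)"
      by (rule mult_left_mono) (use S0 dpos in simp)
    also have "\<dots> = - S" using dpos by simp
    finally have "(1 - 2 / real \<Delta>) powr (S * real \<Delta> / 2) \<le> exp (- S)"
      using bpos by (simp add: powr_def)
    also have "exp (- S) = (\<Prod>k<\<gamma>*\<kappa>. exp (- real (c k)))"
    proof -
      have "S = real (\<Sum>k<\<gamma>*\<kappa>. c k)" unfolding S_def c_def
        by (rule sum_c[symmetric]) (use assms(1,2) in simp_all)
      then have "- S = (\<Sum>k<\<gamma>*\<kappa>. - real (c k))" by (simp add: sum_negf)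
      then show ?thesis by (simp add: exp_sum)
    qed
    also have "\<dots> \<le> (\<Prod>k<\<gamma>*\<kappa>. 1 - real (c k) / real M)"
    proof (rule prod_mono)
      fix k assume "k \<in> {..<\<gamma>*\<kappa>}"
      then show "0 \<le> exp (- real (c k)) \<and> exp (- real (c k)) \<le> 1 - real (c k) / real M"
        using exp_le_factor[OF cM] by simp
    qed
    finally show ?thesis unfolding e if_P[OF True] .
  next
    case False
    then have "2 / (3 * real M) \<le> II" using hyp2 by simp
    then have "2 / (3 * real M) \<le> 27 / (256 * kk)" unfolding II_def kk_def .
    then have M4: "4 * kk \<le> real M" using Mpos kk1 by (simp add: field_simps)
    define b where "b = 1 - (kk + 1) / (4 * kk)"
    have b0: "0 \<le> b" unfolding b_def using kk1 by (simp add: field_simps)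
    have "b ^ card {..<\<gamma>*\<kappa>} \<le> (\<Prod>k<\<gamma>*\<kappa>. 1 - real (c k) / real M)"
      unfolding prod_constant[symmetric]
    proof (rule prod_mono)
      fix k assume k: "k \<in> {..<\<gamma>*\<kappa>}"
      have "c k \<le> D" using cD[of k] k by simp
      then have "real (c k) \<le> real D" by simp
      then have ck: "real (c k) \<le> kk + 1" using Dreal by simp
      have "real (c k) / real M \<le> (kk + 1) / real M"
        by (rule divide_right_mono) (use ck in simp_all)
      also have "\<dots> \<le> (kk + 1) / (4 * kk)"
        by (rule divide_left_mono) (use M4 kk1 in simp_all)
      finally show "0 \<le> b \<and> b \<le> 1 - real (c k) / real M" using b0 unfolding b_def by simp
    qed
    then show ?thesis using False unfolding b_def kk_def by simp
  qed
  have P1: "prob_no_active_c4 \<gamma> \<kappa> m Z > 0" using prob_lb prodpos by linarith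
  define G where "G = {(P, Lm) \<in> partition_matrices \<gamma> \<kappa> m \<times> lifting_matrices \<gamma> \<kappa> Z.
                   \<forall>c \<in> cycle4_candidates \<gamma> \<kappa>. \<not> cycle4_active Z P Lm c}"
  have "G \<noteq> {}"
  proof
    assume "G = {}"
    then have "prob_no_active_c4 \<gamma> \<kappa> m Z = 0" unfolding prob_no_active_c4_def G_def[symmetric] by simp
    then show False using P1 by simp
  qed
  then obtain x where "x \<in> G" by blast
  then obtain P Lm where "(P, Lm) \<in> G" by (cases x) simp
  then have "(P, Lm) \<in> {(P, Lm) \<in> partition_matrices \<gamma> \<kappa> m \<times> lifting_matrices \<gamma> \<kappa> Z.
                   \<forall>c \<in> cycle4_candidates \<gamma> \<kappa>. \<not> cycle4_active Z P Lm c}" unfolding G_def .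
  then have ex: "\<exists>P \<in> partition_matrices \<gamma> \<kappa> m. \<exists>Lm \<in> lifting_matrices \<gamma> \<kappa> Z.
            \<forall>c \<in> cycle4_candidates \<gamma> \<kappa>. \<not> cycle4_active Z P Lm c" by blast
  show ?thesis using bound prob_lb P1 ex by linarith
qed

end
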